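(* Let $k\ge1$, let $K=\Delta_n^{(k)}$ be the $k$-skeleton of the $n$-simplex, let $M$ be a closed PL $2k$-manifold, and let $\psi\colon C_k(K;\mathbb{Z}_2)\to H_k(M;\mathbb{Z}_2)$ be a homomorphism. Let $J$ be an induced subcomplex of $K$ on $2k+3$ vertices. Then for every vertex $v$ of $J$, $$\sum_{\{\sigma',\tau'\}\in P_J}\Omega(\psi(\sigma'),\psi(\tau'))=\sum_{\{\sigma,\tau\}\in P_{J,v}}\Omega\big(\psi(\partial(\sigma*\{v\})),\psi(\partial(\tau*\{v\}))\big),$$ where $P_J$ is the set of unordered pairs $\{\sigma',\tau'\}$ of disjoint $k$-simplices of $J$, $P_{J,v}$ is the set of unordered pairs $\{\sigma,\tau\}$ of disjoint $k$-simplices of $J$ not containing $v$, and $\sigma*\{v\}$ is the $(k+1)$-simplex spanned by the vertices of $\sigma$ and $v$.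
   Context: All coefficients are $\mathbb{Z}_2$. $\Omega$ is the mod-2 intersection form of $M$ on $H_k(M;\mathbb{Z}_2)$, a symmetric bilinear form. For a $(k+1)$-simplex $\kappa$, $\partial\kappa\in C_k(K;\mathbb{Z}_2)$ is the sum of its $k$-faces. *)

theory Defs
  imports Main "HOL-Library.Z2"
begin

(* Vertex set of the n-simplex: {0..n}.  k-simplices of K = Delta_n^(k): (k+1)-subsets. *)
definition ksimplices :: "nat \<Rightarrow> nat \<Rightarrow> nat set set" where
  "ksimplices n k = {s. s \<subseteq> {0..n} \<and> card s = k + 1}"

definition chains :: "nat \<Rightarrow> nat \<Rightarrow> (nat set \<Rightarrow> bit) set" where
  "chains n k = {c. \<forall>s. c s \<noteq> 0 \<longrightarrow> s \<in> ksimplices n k}"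

definition elem :: "nat set \<Rightarrow> (nat set \<Rightarrow> bit)" where
  "elem \<sigma> = (\<lambda>s. if s = \<sigma> then 1 else 0)"

definition bd :: "nat set \<Rightarrow> (nat set \<Rightarrow> bit)" where
  "bd \<kappa> = (\<lambda>s. if s \<subseteq> \<kappa> \<and> card s + 1 = card \<kappa> then 1 else 0)"

(* sum of a (symmetric) function over a set of unordered pairs {x,y}, x \<noteq> y *)
definition upair_sum :: "('s \<Rightarrow> 's \<Rightarrow> 'b::comm_monoid_add) \<Rightarrow> 's set set \<Rightarrow> 'b" where
  "upair_sum g P = (\<Sum>p\<in>P. g (SOME x. x \<in> p) (SOME y. y \<in> p \<and> y \<noteq> (SOME x. x \<in> p)))"

(* P_J for the induced subcomplex on vertex set W *)
definition PJ :: "nat \<Rightarrow> nat \<Rightarrow> nat set \<Rightarrow> nat set set set" where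
  "PJ n k W = {{\<sigma>, \<tau>} | \<sigma> \<tau>. \<sigma> \<in> ksimplices n k \<and> \<tau> \<in> ksimplices n k \<and>
                 \<sigma> \<subseteq> W \<and> \<tau> \<subseteq> W \<and> \<sigma> \<inter> \<tau> = {}}"

definition PJv :: "nat \<Rightarrow> nat \<Rightarrow> nat set \<Rightarrow> nat \<Rightarrow> nat set set set" where
  "PJv n k W v = {{\<sigma>, \<tau>} | \<sigma> \<tau>. \<sigma> \<in> ksimplices n k \<and> \<tau> \<in> ksimplices n k \<and>
                 \<sigma> \<subseteq> W \<and> \<tau> \<subseteq> W \<and> \<sigma> \<inter> \<tau> = {} \<and> v \<notin> \<sigma> \<and> v \<notin> \<tau>}"

end

theory Submission
  imports Defs
begin

lemma upair_term:
  assumes "a \<noteq> b" "\<forall>x y. G x y = G y x"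
  shows "G (SOME x. x \<in> {a,b}) (SOME y. y \<in> {a,b} \<and> y \<noteq> (SOME x. x \<in> {a,b})) = G a b"
proof -
  define s where "s = (SOME x. x \<in> {a,b})"
  have s: "s \<in> {a,b}" unfolding s_def by (rule someI[of _ a]) simp
  define t where "t = (SOME y. y \<in> {a,b} \<and> y \<noteq> s)"
  have t: "t \<in> {a,b} \<and> t \<noteq> s" unfolding t_def apply (rule someI_ex) using s assms(1) by auto
  show ?thesis unfolding s_def[symmetric] t_def[symmetric] using s t assms by auto
qed

lemma upair_sum_bij:
  assumes "bij_betw (\<lambda>x. {f1 x, f2 x}) X P" "\<forall>x\<in>X. f1 x \<noteq> f2 x" "\<forall>x y. G x y = G y x"
  shows "upair_sum G P = (\<Sum>x\<in>X. G (f1 x) (f2 x))"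
proof -
  have "upair_sum G P = (\<Sum>x\<in>X. (\<lambda>p. G (SOME x. x \<in> p) (SOME y. y \<in> p \<and> y \<noteq> (SOME x. x \<in> p))) {f1 x, f2 x})"
    unfolding upair_sum_def by (rule sum.reindex_bij_betw[OF assms(1), symmetric])
  also have "\<dots> = (\<Sum>x\<in>X. G (f1 x) (f2 x))"
  proof (rule sum.cong[OF refl])
    fix x assume "x \<in> X"
    show "(\<lambda>p. G (SOME x. x \<in> p) (SOME y. y \<in> p \<and> y \<noteq> (SOME x. x \<in> p))) {f1 x, f2 x} = G (f1 x) (f2 x)"
      using upair_term[of "f1 x" "f2 x" G] assms(2,3) \<open>x \<in> X\<close> by simp
  qed
  finally show ?thesis .
qed

lemma bilin4:
  fixes B :: "'a::plus \<Rightarrow> 'a \<Rightarrow> 'b::ab_semigroup_add"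
  assumes "\<And>x y z. B (x+y) z = B x z + B y z" "\<And>x y z. B z (x+y) = B z x + B z y"
  shows "B (a+sa) (b+sb) = B a b + B a sb + B sa b + B sa sb"
  by (simp add: assms ac_simps)

lemma part23:
  fixes g :: "nat set \<Rightarrow> nat set \<Rightarrow> 'b::comm_monoid_add"
  assumes finW: "finite W" and v: "v \<in> W" and cW: "card W = 2*k+3" and mV: "m \<in> W - {v}"
    and gsym: "\<forall>x y. g x y = g y x"
  defines "V \<equiv> W - {v}"
  defines "S \<equiv> {\<sigma>. \<sigma> \<subseteq> V \<and> m \<in> \<sigma> \<and> card \<sigma> = k+1}"
  defines "Y \<equiv> (SIGMA A:{A. A \<subseteq> W \<and> v \<in> A \<and> card A = k+1}. W - A)"
  shows "(\<Sum>\<sigma>\<in>S. \<Sum>y\<in>V - \<sigma>. g \<sigma> (insert v (V - \<sigma>) - {y}))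
       + (\<Sum>\<sigma>\<in>S. \<Sum>x\<in>\<sigma>. g (insert v \<sigma> - {x}) (V - \<sigma>))
       = (\<Sum>p\<in>Y. g (fst p) (W - fst p - {snd p}))"
proof -
  have finV: "finite V" using finW V_def by auto
  have cardV: "card V = 2*k+2" using cW v finW V_def by simp
  have vV: "v \<notin> V" "V \<subseteq> W" "m \<in> V" using V_def mV by auto
  have finS: "finite S" using finV finite_subset[of S "Pow V"] unfolding S_def by auto
  have Sprop: "finite \<sigma> \<and> \<sigma> \<subseteq> V \<and> m \<in> \<sigma> \<and> card \<sigma> = k+1 \<and> card (V - \<sigma>) = k+1 \<and> v \<notin> \<sigma> \<and> \<sigma> \<subseteq> W
     \<and> finite (V - \<sigma>) \<and> v \<notin> V - \<sigma>" if "\<sigma> \<in> S" for \<sigma>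
  proof -
    have "\<sigma> \<subseteq> V" "card \<sigma> = k+1" using that S_def by auto
    moreover have "card (V - \<sigma>) = k+1" using calculation finV cardV by (simp add: card_Diff_subset finite_subset)
    ultimately show ?thesis using that S_def vV finV finite_subset by auto
  qed
  have Yprop: "finite A \<and> A \<subseteq> W \<and> v \<in> A \<and> card A = k+1 \<and> x \<in> W \<and> x \<notin> A \<and> x \<noteq> v
     \<and> card (W - A - {x}) = k+1 \<and> finite (W - A)" if "(A,x) \<in> Y" for A x
  proof -
    have A: "A \<subseteq> W" "v \<in> A" "card A = k+1" "x \<in> W - A" using that Y_def by auto
    have fA: "finite A" using A finW finite_subset by auto
    have "card (W - A) = k+2" using A fA finW cW by (simp add: card_Diff_subset)
    hence "card (W - A - {x}) = k+1" using A by simp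
    thus ?thesis using A fA finW by auto
  qed
  define G1 where "G1 = (\<lambda>p. g (fst p) (W - fst p - {snd p}))"
  define X2 where "X2 = (SIGMA \<sigma>:S. V - \<sigma>)"
  define X3 where "X3 = (SIGMA \<sigma>:S. \<sigma>)"
  define Y2 where "Y2 = {p \<in> Y. m \<in> W - fst p - {snd p}}"
  define Y3 where "Y3 = {p \<in> Y. m \<notin> W - fst p - {snd p}}"
  have finY: "finite Y" unfolding Y_def
    by (rule finite_SigmaI) (use finW in \<open>auto intro: finite_subset\<close>)
  have "(\<Sum>\<sigma>\<in>S. \<Sum>y\<in>V - \<sigma>. g \<sigma> (insert v (V - \<sigma>) - {y})) = (\<Sum>(\<sigma>,y)\<in>X2. g \<sigma> (insert v (V - \<sigma>) - {y}))"
    unfolding X2_def by (rule sum.Sigma) (use finS Sprop finV in auto)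
  also have "\<dots> = (\<Sum>z\<in>X2. G1 ((\<lambda>(\<sigma>,y). (insert v (V - \<sigma>) - {y}, y)) z))"
  proof (rule sum.cong[OF refl])
    fix z assume "z \<in> X2"
    then obtain \<sigma> y where z: "z = (\<sigma>,y)" "\<sigma> \<in> S" "y \<in> V - \<sigma>" unfolding X2_def by auto
    note sp = Sprop[OF z(2)]
    have "W - (insert v (V - \<sigma>) - {y}) - {y} = \<sigma>" using sp z(3) V_def by auto
    thus "(case z of (\<sigma>, y) \<Rightarrow> g \<sigma> (insert v (V - \<sigma>) - {y})) = G1 ((\<lambda>(\<sigma>,y). (insert v (V - \<sigma>) - {y}, y)) z)"
      unfolding G1_def using z gsym by simp
  qed
  also have "\<dots> = (\<Sum>p\<in>Y2. G1 p)"
  proof (rule sum.reindex_bij_betw, rule bij_betw_byWitness[where f'="\<lambda>(A,x). (W - A - {x}, x)"])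
    show "\<forall>a\<in>X2. (\<lambda>(A,x). (W - A - {x}, x)) ((\<lambda>(\<sigma>,y). (insert v (V - \<sigma>) - {y}, y)) a) = a"
    proof
      fix a assume "a \<in> X2"
      then obtain \<sigma> y where z: "a = (\<sigma>,y)" "\<sigma> \<in> S" "y \<in> V - \<sigma>" unfolding X2_def by auto
      note sp = Sprop[OF z(2)]
      have "W - (insert v (V - \<sigma>) - {y}) - {y} = \<sigma>" using sp z(3) V_def by auto
      thus "(\<lambda>(A,x). (W - A - {x}, x)) ((\<lambda>(\<sigma>,y). (insert v (V - \<sigma>) - {y}, y)) a) = a" using z by simp
    qed
    show "\<forall>a\<in>Y2. (\<lambda>(\<sigma>,y). (insert v (V - \<sigma>) - {y}, y)) ((\<lambda>(A,x). (W - A - {x}, x)) a) = a"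
    proof
      fix a assume "a \<in> Y2"
      then obtain A x where z: "a = (A,x)" "(A,x) \<in> Y" unfolding Y2_def by (cases a) auto
      note yp = Yprop[OF z(2)]
      have "insert v (V - (W - A - {x})) - {x} = A" using yp V_def by auto
      thus "(\<lambda>(\<sigma>,y). (insert v (V - \<sigma>) - {y}, y)) ((\<lambda>(A,x). (W - A - {x}, x)) a) = a" using z by simp
    qed
    show "(\<lambda>(\<sigma>,y). (insert v (V - \<sigma>) - {y}, y)) ` X2 \<subseteq> Y2"
    proof
      fix b assume "b \<in> (\<lambda>(\<sigma>,y). (insert v (V - \<sigma>) - {y}, y)) ` X2"
      then obtain \<sigma> y where z: "b = (insert v (V - \<sigma>) - {y}, y)" "\<sigma> \<in> S" "y \<in> V - \<sigma>" unfolding X2_def by auto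
      note sp = Sprop[OF z(2)]
      have c: "card (insert v (V - \<sigma>) - {y}) = k+1" using sp z(3) vV by (simp add: card_insert_if)
      have "W - (insert v (V - \<sigma>) - {y}) - {y} = \<sigma>" using sp z(3) V_def by auto
      thus "b \<in> Y2" unfolding Y2_def Y_def using z c sp vV v by auto
    qed
    show "(\<lambda>(A,x). (W - A - {x}, x)) ` Y2 \<subseteq> X2"
    proof
      fix b assume "b \<in> (\<lambda>(A,x). (W - A - {x}, x)) ` Y2"
      then obtain A x where z: "b = (W - A - {x}, x)" "(A,x) \<in> Y" "m \<in> W - A - {x}" unfolding Y2_def by auto
      note yp = Yprop[OF z(2)]
      show "b \<in> X2" unfolding X2_def S_def using z yp V_def by auto
    qed
  qed
  finally have s2: "(\<Sum>\<sigma>\<in>S. \<Sum>y\<in>V - \<sigma>. g \<sigma> (insert v (V - \<sigma>) - {y})) = (\<Sum>p\<in>Y2. G1 p)" .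
  have "(\<Sum>\<sigma>\<in>S. \<Sum>x\<in>\<sigma>. g (insert v \<sigma> - {x}) (V - \<sigma>)) = (\<Sum>(\<sigma>,x)\<in>X3. g (insert v \<sigma> - {x}) (V - \<sigma>))"
    unfolding X3_def by (rule sum.Sigma) (use finS Sprop finV in auto)
  also have "\<dots> = (\<Sum>z\<in>X3. G1 ((\<lambda>(\<sigma>,x). (insert v \<sigma> - {x}, x)) z))"
  proof (rule sum.cong[OF refl])
    fix z assume "z \<in> X3"
    then obtain \<sigma> x where z: "z = (\<sigma>,x)" "\<sigma> \<in> S" "x \<in> \<sigma>" unfolding X3_def by auto
    note sp = Sprop[OF z(2)]
    have "W - (insert v \<sigma> - {x}) - {x} = V - \<sigma>" using sp z(3) V_def by auto
    thus "(case z of (\<sigma>, x) \<Rightarrow> g (insert v \<sigma> - {x}) (V - \<sigma>)) = G1 ((\<lambda>(\<sigma>,x). (insert v \<sigma> - {x}, x)) z)"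
      unfolding G1_def using z by simp
  qed
  also have "\<dots> = (\<Sum>p\<in>Y3. G1 p)"
  proof (rule sum.reindex_bij_betw, rule bij_betw_byWitness[where f'="\<lambda>(A,x). (insert x (A - {v}), x)"])
    show "\<forall>a\<in>X3. (\<lambda>(A,x). (insert x (A - {v}), x)) ((\<lambda>(\<sigma>,x). (insert v \<sigma> - {x}, x)) a) = a"
    proof
      fix a assume "a \<in> X3"
      then obtain \<sigma> y where z: "a = (\<sigma>,y)" "\<sigma> \<in> S" "y \<in> \<sigma>" unfolding X3_def by auto
      note sp = Sprop[OF z(2)]
      have "insert y (insert v \<sigma> - {y} - {v}) = \<sigma>" using sp z(3) by auto
      thus "(\<lambda>(A,x). (insert x (A - {v}), x)) ((\<lambda>(\<sigma>,x). (insert v \<sigma> - {x}, x)) a) = a" using z by simp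
    qed
    show "\<forall>a\<in>Y3. (\<lambda>(\<sigma>,x). (insert v \<sigma> - {x}, x)) ((\<lambda>(A,x). (insert x (A - {v}), x)) a) = a"
    proof
      fix a assume "a \<in> Y3"
      then obtain A x where z: "a = (A,x)" "(A,x) \<in> Y" unfolding Y3_def by (cases a) auto
      note yp = Yprop[OF z(2)]
      have "insert v (insert x (A - {v})) - {x} = A" using yp by auto
      thus "(\<lambda>(\<sigma>,x). (insert v \<sigma> - {x}, x)) ((\<lambda>(A,x). (insert x (A - {v}), x)) a) = a" using z by simp
    qed
    show "(\<lambda>(\<sigma>,x). (insert v \<sigma> - {x}, x)) ` X3 \<subseteq> Y3"
    proof
      fix b assume "b \<in> (\<lambda>(\<sigma>,x). (insert v \<sigma> - {x}, x)) ` X3"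
      then obtain \<sigma> y where z: "b = (insert v \<sigma> - {y}, y)" "\<sigma> \<in> S" "y \<in> \<sigma>" unfolding X3_def by auto
      note sp = Sprop[OF z(2)]
      have c: "card (insert v \<sigma> - {y}) = k+1" using sp z(3) vV by (simp add: card_insert_if)
      have "W - (insert v \<sigma> - {y}) - {y} = V - \<sigma>" using sp z(3) V_def by auto
      thus "b \<in> Y3" unfolding Y3_def Y_def using z c sp vV v by auto
    qed
    show "(\<lambda>(A,x). (insert x (A - {v}), x)) ` Y3 \<subseteq> X3"
    proof
      fix b assume "b \<in> (\<lambda>(A,x). (insert x (A - {v}), x)) ` Y3"
      then obtain A x where z: "b = (insert x (A - {v}), x)" "(A,x) \<in> Y" "m \<notin> W - A - {x}" unfolding Y3_def by auto
      note yp = Yprop[OF z(2)]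
      have c: "card (insert x (A - {v})) = k+1" using yp by simp
      show "b \<in> X3" unfolding X3_def S_def using z yp V_def c vV by auto
    qed
  qed
  finally have s3: "(\<Sum>\<sigma>\<in>S. \<Sum>x\<in>\<sigma>. g (insert v \<sigma> - {x}) (V - \<sigma>)) = (\<Sum>p\<in>Y3. G1 p)" .
  have "(\<Sum>p\<in>Y. G1 p) = (\<Sum>p\<in>Y2. G1 p) + (\<Sum>p\<in>Y3. G1 p)"
  proof -
    have "Y = Y2 \<union> Y3" "Y2 \<inter> Y3 = {}" unfolding Y2_def Y3_def by auto
    thus ?thesis using finY by (simp add: sum.union_disjoint)
  qed
  thus ?thesis using s2 s3 G1_def by simp
qed

lemma sum_involution_bit:
  fixes h :: "'a \<Rightarrow> bit"
  assumes "finite X" "\<forall>z\<in>X. i z \<in> X \<and> i (i z) = z \<and> i z \<noteq> z \<and> h (i z) = h z"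
  shows "sum h X = 0"
  using assms
proof (induction X rule: finite_psubset_induct)
  case (psubset X)
  show ?case
  proof (cases "X = {}")
    case True thus ?thesis by simp
  next
    case False
    then obtain z where z: "z \<in> X" by blast
    let ?Y = "X - {z, i z}"
    have "?Y \<subset> X" using z by auto
    moreover have "\<forall>w\<in>?Y. i w \<in> ?Y \<and> i (i w) = w \<and> i w \<noteq> w \<and> h (i w) = h w"
      using psubset.prems z by (smt (verit) Diff_iff insertCI insertE singleton_iff)
    ultimately have Y: "sum h ?Y = 0" using psubset.IH psubset.hyps by blast
    have "sum h X = sum h ?Y + sum h {z, i z}"
      by (rule sum.subset_diff) (use z psubset in auto)
    also have "sum h {z, i z} = 0" using z psubset.prems by auto
    finally show ?thesis using Y by simp
  qed
qed



lemma part4: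
  fixes g :: "nat set \<Rightarrow> nat set \<Rightarrow> bit"
  assumes finW: "finite W" and v: "v \<in> W" and cW: "card W = 2*k+3" and mV: "m \<in> W - {v}"
    and gsym: "\<forall>x y. g x y = g y x" and k: "k \<ge> 1"
  defines "V \<equiv> W - {v}"
  defines "S \<equiv> {\<sigma>. \<sigma> \<subseteq> V \<and> m \<in> \<sigma> \<and> card \<sigma> = k+1}"
  shows "(\<Sum>\<sigma>\<in>S. \<Sum>x\<in>\<sigma>. \<Sum>y\<in>V - \<sigma>. g (insert v \<sigma> - {x}) (insert v (V - \<sigma>) - {y})) = 0"
proof -
  have finV: "finite V" using finW V_def by auto
  have cardV: "card V = 2*k+2" using cW v finW V_def by simp
  have vV: "v \<notin> V" "V \<subseteq> W" "m \<in> V" using V_def mV by auto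
  have finS: "finite S" using finV finite_subset[of S "Pow V"] unfolding S_def by auto
  have Sprop: "finite \<sigma> \<and> \<sigma> \<subseteq> V \<and> m \<in> \<sigma> \<and> card \<sigma> = k+1 \<and> card (V - \<sigma>) = k+1 \<and> v \<notin> \<sigma> \<and> \<sigma> \<subseteq> W
     \<and> finite (V - \<sigma>) \<and> v \<notin> V - \<sigma>" if "\<sigma> \<in> S" for \<sigma>
  proof -
    have "\<sigma> \<subseteq> V" "card \<sigma> = k+1" using that S_def by auto
    moreover have "card (V - \<sigma>) = k+1" using calculation finV cardV by (simp add: card_Diff_subset finite_subset)
    ultimately show ?thesis using that S_def vV finV finite_subset by auto
  qed
  define h where "h = (\<lambda>(\<sigma>,x,y). g (insert v \<sigma> - {x}) (insert v (V - \<sigma>) - {y}))"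
  define X4 where "X4 = (SIGMA \<sigma>:S. \<sigma> \<times> (V - \<sigma>))"
  define \<iota> where "\<iota> = (\<lambda>(\<sigma>,x,y). if x = m then (insert m (V - \<sigma> - {y}), m, y) else (insert y (\<sigma> - {x}), y, x))"
  have "(\<Sum>\<sigma>\<in>S. \<Sum>x\<in>\<sigma>. \<Sum>y\<in>V - \<sigma>. g (insert v \<sigma> - {x}) (insert v (V - \<sigma>) - {y}))
      = (\<Sum>\<sigma>\<in>S. \<Sum>q\<in>\<sigma> \<times> (V - \<sigma>). h (\<sigma>, q))"
  proof (rule sum.cong[OF refl])
    fix \<sigma> assume "\<sigma> \<in> S"
    have "(\<Sum>x\<in>\<sigma>. \<Sum>y\<in>V - \<sigma>. g (insert v \<sigma> - {x}) (insert v (V - \<sigma>) - {y}))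
        = (\<Sum>(x,y)\<in>\<sigma> \<times> (V - \<sigma>). g (insert v \<sigma> - {x}) (insert v (V - \<sigma>) - {y}))"
      by (rule sum.cartesian_product)
    also have "\<dots> = (\<Sum>q\<in>\<sigma> \<times> (V - \<sigma>). h (\<sigma>, q))"
      by (rule sum.cong[OF refl]) (auto simp: h_def)
    finally show "(\<Sum>x\<in>\<sigma>. \<Sum>y\<in>V - \<sigma>. g (insert v \<sigma> - {x}) (insert v (V - \<sigma>) - {y}))
        = (\<Sum>q\<in>\<sigma> \<times> (V - \<sigma>). h (\<sigma>, q))" .
  qed
  also have "\<dots> = sum h X4"
  proof -
    have "\<forall>x\<in>S. finite (x \<times> (V - x))" using Sprop by auto
    thus ?thesis unfolding X4_def using sum.Sigma[of S "\<lambda>\<sigma>. \<sigma> \<times> (V - \<sigma>)" "\<lambda>\<sigma> q. h (\<sigma>, q)"] finS by simp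
  qed
  also have "\<dots> = 0"
  proof (rule sum_involution_bit[where i = \<iota>])
    show "finite X4" unfolding X4_def using finS Sprop by (auto intro!: finite_SigmaI)
    show "\<forall>z\<in>X4. \<iota> z \<in> X4 \<and> \<iota> (\<iota> z) = z \<and> \<iota> z \<noteq> z \<and> h (\<iota> z) = h z"
    proof
      fix z assume "z \<in> X4"
      then obtain \<sigma> x y where z: "z = (\<sigma>,x,y)" "\<sigma> \<in> S" "x \<in> \<sigma>" "y \<in> V - \<sigma>" unfolding X4_def by auto
      note sp = Sprop[OF z(2)]
      show "\<iota> z \<in> X4 \<and> \<iota> (\<iota> z) = z \<and> \<iota> z \<noteq> z \<and> h (\<iota> z) = h z"
      proof (cases "x = m")
        case True
        define \<sigma>' where "\<sigma>' = insert m (V - \<sigma> - {y})"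
        have iz: "\<iota> z = (\<sigma>', m, y)" using z True \<sigma>'_def \<iota>_def by simp
        have c: "card \<sigma>' = k+1" unfolding \<sigma>'_def using sp z(4) by simp
        have s'S: "\<sigma>' \<in> S" unfolding S_def \<sigma>'_def using c sp vV \<sigma>'_def by auto
        have yin: "y \<in> V - \<sigma>'" unfolding \<sigma>'_def using z sp by auto
        have in4: "\<iota> z \<in> X4" unfolding X4_def iz using s'S yin \<sigma>'_def by auto
        have bk: "insert m (V - \<sigma>' - {y}) = \<sigma>" unfolding \<sigma>'_def using z sp True by auto
        have ii: "\<iota> (\<iota> z) = z" using iz bk z True \<iota>_def by simp
        have "card (V - \<sigma> - {y}) = k" using sp z(4) by simp
        hence "V - \<sigma> - {y} \<noteq> {}" using k by (metis card.empty not_one_le_zero)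
        then obtain w where w: "w \<in> V - \<sigma> - {y}" by blast
        hence "\<sigma>' \<noteq> \<sigma>" unfolding \<sigma>'_def by auto
        hence ne: "\<iota> z \<noteq> z" using iz z by simp
        have e1: "insert v \<sigma>' - {m} = insert v (V - \<sigma>) - {y}" unfolding \<sigma>'_def using z sp vV by auto
        have e2: "insert v (V - \<sigma>') - {y} = insert v \<sigma> - {m}" unfolding \<sigma>'_def using z sp vV True by auto
        have "h (\<iota> z) = h z" unfolding iz h_def using z True e1 e2 gsym by simp
        thus ?thesis using in4 ii ne by simp
      next
        case False
        define \<sigma>' where "\<sigma>' = insert y (\<sigma> - {x})"
        have iz: "\<iota> z = (\<sigma>', y, x)" using z False \<sigma>'_def \<iota>_def by simp
        have c: "card \<sigma>' = k+1" unfolding \<sigma>'_def using sp z by simp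
        have s'S: "\<sigma>' \<in> S" unfolding S_def \<sigma>'_def using c sp vV \<sigma>'_def z False by auto
        have xin: "x \<in> V - \<sigma>'" unfolding \<sigma>'_def using z sp by auto
        have in4: "\<iota> z \<in> X4" unfolding X4_def iz using s'S xin \<sigma>'_def by auto
        have ym: "y \<noteq> m" using z sp by auto
        have bk: "insert x (\<sigma>' - {y}) = \<sigma>" unfolding \<sigma>'_def using z sp by auto
        have ii: "\<iota> (\<iota> z) = z" using iz bk z ym \<iota>_def by simp
        have ne: "\<iota> z \<noteq> z" using iz z by auto
        have e1: "insert v \<sigma>' - {y} = insert v \<sigma> - {x}" unfolding \<sigma>'_def using z sp vV by auto
        have e2: "insert v (V - \<sigma>') - {x} = insert v (V - \<sigma>) - {y}" unfolding \<sigma>'_def using z sp vV by auto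
        have "h (\<iota> z) = h z" unfolding iz h_def using z e1 e2 by simp
        thus ?thesis using in4 ii ne by simp
      qed
    qed
  qed
  finally show ?thesis .
qed

theorem lemma17:
  fixes n k :: nat and W :: "nat set" and v :: nat
    and \<psi> :: "(nat set \<Rightarrow> bit) \<Rightarrow> 'v::ab_group_add"
    and \<Omega> :: "'v \<Rightarrow> 'v \<Rightarrow> bit"
  assumes k: "k \<ge> 1"
    and char2: "\<And>x::'v. x + x = 0"
    and psi_hom: "\<And>c d. c \<in> chains n k \<Longrightarrow> d \<in> chains n k \<Longrightarrow> \<psi> (\<lambda>s. c s + d s) = \<psi> c + \<psi> d"
    and Omega_lin: "\<And>x y z. \<Omega> (x + y) z = \<Omega> x z + \<Omega> y z"
    and Omega_sym: "\<And>x y. \<Omega> x y = \<Omega> y x"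
    and W: "W \<subseteq> {0..n}" "card W = 2 * k + 3"
    and v: "v \<in> W"
  shows "upair_sum (\<lambda>\<sigma> \<tau>. \<Omega> (\<psi> (elem \<sigma>)) (\<psi> (elem \<tau>))) (PJ n k W)
       = upair_sum (\<lambda>\<sigma> \<tau>. \<Omega> (\<psi> (bd (\<sigma> \<union> {v}))) (\<psi> (bd (\<tau> \<union> {v})))) (PJv n k W v)"
proof -
  have finW: "finite W" using W(2) card.infinite by fastforce
  define V where "V = W - {v}"
  have finV: "finite V" using finW V_def by auto
  have cardV: "card V = 2*k+2" using W(2) v finW V_def by simp
  have vV: "v \<notin> V" "V \<subseteq> W" using V_def by auto
  have "V \<noteq> {}" using cardV by auto
  define m where "m = Min V"
  have mV: "m \<in> V" using m_def finV \<open>V \<noteq> {}\<close> by simp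
  define S where "S = {\<sigma>. \<sigma> \<subseteq> V \<and> m \<in> \<sigma> \<and> card \<sigma> = k+1}"
  define T where "T = {A. A \<subseteq> W \<and> v \<in> A \<and> card A = k+1}"
  define g where "g = (\<lambda>A B. \<Omega> (\<psi> (elem A)) (\<psi> (elem B)))"
  have gsym: "\<forall>x y. g x y = g y x" using Omega_sym g_def by auto
  have ks: "A \<in> ksimplices n k \<longleftrightarrow> A \<subseteq> {0..n} \<and> card A = k+1" for A by (simp add: ksimplices_def)
  have Sprop: "finite \<sigma> \<and> \<sigma> \<subseteq> V \<and> m \<in> \<sigma> \<and> card \<sigma> = k+1 \<and> card (V - \<sigma>) = k+1 \<and> v \<notin> \<sigma> \<and> \<sigma> \<subseteq> W
     \<and> finite (V - \<sigma>) \<and> v \<notin> V - \<sigma>" if "\<sigma> \<in> S" for \<sigma>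
  proof -
    have "\<sigma> \<subseteq> V" "card \<sigma> = k+1" using that S_def by auto
    moreover have "card (V - \<sigma>) = k+1" using calculation finV cardV by (simp add: card_Diff_subset finite_subset)
    ultimately show ?thesis using that S_def vV finV finite_subset by auto
  qed

  have zero_chain: "(\<lambda>s. 0) \<in> chains n k" by (simp add: chains_def)
  have psi0: "\<psi> (\<lambda>s. 0) = 0"
  proof -
    have "\<psi> (\<lambda>s. 0 + 0) = \<psi> (\<lambda>s. 0) + \<psi> (\<lambda>s. 0)" using psi_hom[OF zero_chain zero_chain] .
    thus ?thesis by simp
  qed
  have elem_chain: "elem A \<in> chains n k" if "A \<in> ksimplices n k" for A
    using that by (simp add: chains_def elem_def)
  have sum_chain: "(\<lambda>s. \<Sum>x\<in>F. c x s) \<in> chains n k" if "\<forall>x\<in>F. c x \<in> chains n k" for F and c :: "'a \<Rightarrow> nat set \<Rightarrow> bit"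
  proof -
    have "s \<in> ksimplices n k" if "(\<Sum>x\<in>F. c x s) \<noteq> 0" for s
    proof -
      obtain x where "x \<in> F" "c x s \<noteq> 0" using \<open>(\<Sum>x\<in>F. c x s) \<noteq> 0\<close> sum.neutral by metis
      thus ?thesis using \<open>\<forall>x\<in>F. c x \<in> chains n k\<close> by (auto simp: chains_def)
    qed
    thus ?thesis by (auto simp: chains_def)
  qed
  have psi_sum: "\<psi> (\<lambda>s. \<Sum>x\<in>F. c x s) = (\<Sum>x\<in>F. \<psi> (c x))"
    if "finite F" "\<forall>x\<in>F. c x \<in> chains n k" for F and c :: "'a \<Rightarrow> nat set \<Rightarrow> bit"
    using that
  proof (induction F rule: finite_induct)
    case empty thus ?case using psi0 by simp
  next
    case (insert x F)
    have "\<psi> (\<lambda>s. \<Sum>y\<in>insert x F. c y s) = \<psi> (\<lambda>s. c x s + (\<Sum>y\<in>F. c y s))"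
      using insert.hyps by simp
    also have "\<dots> = \<psi> (c x) + \<psi> (\<lambda>s. \<Sum>y\<in>F. c y s)"
      using psi_hom[of "c x" "\<lambda>s. \<Sum>y\<in>F. c y s"] sum_chain[of F c] insert.prems by (simp add: eta_contract_eq)
    also have "\<dots> = (\<Sum>y\<in>insert x F. \<psi> (c y))" using insert by simp
    finally show ?case .
  qed
  have Om0: "\<Omega> 0 z = 0" for z
  proof -
    have "\<Omega> (0 + 0) z = \<Omega> 0 z + \<Omega> 0 z" by (rule Omega_lin)
    thus ?thesis by simp
  qed
  have Om_sum1: "\<Omega> (\<Sum>x\<in>F. a x) z = (\<Sum>x\<in>F. \<Omega> (a x) z)" if "finite F" for F and a :: "'b \<Rightarrow> 'v" and z
    using that by (induction F rule: finite_induct) (simp_all add: Om0 Omega_lin)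
  have Om_sum2: "\<Omega> z (\<Sum>x\<in>F. a x) = (\<Sum>x\<in>F. \<Omega> z (a x))" if "finite F" for F and a :: "'b \<Rightarrow> 'v" and z
  proof -
    have "\<Omega> z (\<Sum>x\<in>F. a x) = \<Omega> (\<Sum>x\<in>F. a x) z" by (rule Omega_sym)
    also have "\<dots> = (\<Sum>x\<in>F. \<Omega> (a x) z)" by (rule Om_sum1[OF that])
    also have "\<dots> = (\<Sum>x\<in>F. \<Omega> z (a x))" by (rule sum.cong[OF refl]) (rule Omega_sym)
    finally show ?thesis .
  qed

  have bd_exp: "\<psi> (bd \<kappa>) = (\<Sum>x\<in>\<kappa>. \<psi> (elem (\<kappa> - {x})))" if "\<kappa> \<subseteq> W" "card \<kappa> = k+2" for \<kappa>
  proof -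
    have fk: "finite \<kappa>" using that finW finite_subset by auto
    have "bd \<kappa> = (\<lambda>s. \<Sum>x\<in>\<kappa>. elem (\<kappa>-{x}) s)"
    proof (rule ext)
      fix s
      show "bd \<kappa> s = (\<Sum>x\<in>\<kappa>. elem (\<kappa>-{x}) s)"
      proof (cases "s \<subseteq> \<kappa> \<and> card s + 1 = card \<kappa>")
        case True
        then have "card (\<kappa> - s) = 1" using fk card_Diff_subset[of s \<kappa>] finite_subset[of s \<kappa>] by auto
        then obtain x0 where x0s: "\<kappa> - s = {x0}" by (rule card_1_singletonE)
        hence x0: "x0 \<in> \<kappa>" "s = \<kappa> - {x0}" using True by auto
        have "(\<Sum>x\<in>\<kappa>. elem (\<kappa>-{x}) s) = (\<Sum>x\<in>\<kappa>. if x = x0 then 1 else 0)"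
          by (rule sum.cong[OF refl]) (use x0 in \<open>auto simp: elem_def\<close>)
        also have "\<dots> = 1" using x0 fk by simp
        finally show ?thesis using True by (simp add: bd_def)
      next
        case False
        have "elem (\<kappa>-{x}) s = 0" if "x\<in>\<kappa>" for x
          using False that fk \<open>card \<kappa> = k+2\<close> by (auto simp: elem_def)
        thus ?thesis using False by (simp add: bd_def)
      qed
    qed
    moreover have "\<forall>x\<in>\<kappa>. elem (\<kappa>-{x}) \<in> chains n k"
    proof
      fix x assume "x \<in> \<kappa>"
      hence "\<kappa>-{x} \<in> ksimplices n k" using that W fk by (auto simp: ks)
      thus "elem (\<kappa>-{x}) \<in> chains n k" by (rule elem_chain)
    qed
    ultimately show ?thesis using psi_sum[OF fk] by simp
  qed

  define P1 where "P1 = {{\<sigma>, \<tau>} | \<sigma> \<tau>. \<sigma> \<in> ksimplices n k \<and> \<tau> \<in> ksimplices n k \<and>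
                 \<sigma> \<subseteq> W \<and> \<tau> \<subseteq> W \<and> \<sigma> \<inter> \<tau> = {} \<and> v \<in> \<sigma>}"
  have PJ_split: "PJ n k W = PJv n k W v \<union> P1"
  proof
    show "PJ n k W \<subseteq> PJv n k W v \<union> P1"
    proof
      fix p assume "p \<in> PJ n k W"
      then obtain \<sigma> \<tau> where p: "p = {\<sigma>,\<tau>}" "\<sigma> \<in> ksimplices n k" "\<tau> \<in> ksimplices n k"
        "\<sigma> \<subseteq> W" "\<tau> \<subseteq> W" "\<sigma> \<inter> \<tau> = {}" unfolding PJ_def by blast
      show "p \<in> PJv n k W v \<union> P1"
      proof (cases "v \<in> \<sigma>")
        case True show ?thesis unfolding P1_def
          apply (rule UnI2, rule CollectI, rule exI[where x="\<sigma>"], rule exI[where x="\<tau>"]) using p True by auto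
      next
        case F1: False
        show ?thesis
        proof (cases "v \<in> \<tau>")
          case True
          have "p = {\<tau>,\<sigma>}" using p by auto
          show ?thesis unfolding \<open>p = {\<tau>,\<sigma>}\<close> P1_def
            apply (rule UnI2, rule CollectI, rule exI[where x="\<tau>"], rule exI[where x="\<sigma>"]) using p True by auto
        next
          case False show ?thesis unfolding PJv_def
            apply (rule UnI1, rule CollectI, rule exI[where x="\<sigma>"], rule exI[where x="\<tau>"]) using p F1 False by auto
        qed
      qed
    qed
    show "PJv n k W v \<union> P1 \<subseteq> PJ n k W" unfolding PJ_def PJv_def P1_def by blast
  qed
  have PJ_disj: "PJv n k W v \<inter> P1 = {}"
  proof (rule ccontr)
    assume "PJv n k W v \<inter> P1 \<noteq> {}"
    then obtain p where "p \<in> PJv n k W v" "p \<in> P1" by blast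
    then obtain \<sigma> \<tau> \<sigma>' \<tau>' where "p = {\<sigma>,\<tau>}" "v \<notin> \<sigma>" "v \<notin> \<tau>" "p = {\<sigma>',\<tau>'}" "v \<in> \<sigma>'"
      unfolding PJv_def P1_def by blast
    thus False by auto
  qed
  have finPJ: "finite (PJ n k W)"
  proof (rule finite_subset)
    show "PJ n k W \<subseteq> Pow (Pow W)" unfolding PJ_def by auto
    show "finite (Pow (Pow W))" using finW by simp
  qed
  have upair_split: "upair_sum G (PJ n k W) = upair_sum G (PJv n k W v) + upair_sum G P1" for G :: "nat set \<Rightarrow> nat set \<Rightarrow> bit"
    unfolding upair_sum_def PJ_split
    by (rule sum.union_disjoint) (use finPJ PJ_split PJ_disj in auto)

  have bijv: "bij_betw (\<lambda>\<sigma>. {\<sigma>, V - \<sigma>}) S (PJv n k W v)"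
    unfolding bij_betw_def
  proof
    show "inj_on (\<lambda>\<sigma>. {\<sigma>, V - \<sigma>}) S"
    proof (rule inj_onI)
      fix a b assume ab: "a \<in> S" "b \<in> S" "{a, V - a} = {b, V - b}"
      have "a \<in> {b, V - b}" using ab(3) by auto
      thus "a = b" using Sprop[OF ab(1)] Sprop[OF ab(2)] by auto
    qed
    show "(\<lambda>\<sigma>. {\<sigma>, V - \<sigma>}) ` S = PJv n k W v"
    proof
      show "(\<lambda>\<sigma>. {\<sigma>, V - \<sigma>}) ` S \<subseteq> PJv n k W v"
      proof
        fix p assume "p \<in> (\<lambda>\<sigma>. {\<sigma>, V - \<sigma>}) ` S"
        then obtain \<sigma> where "\<sigma> \<in> S" "p = {\<sigma>, V - \<sigma>}" by blast
        note sp = Sprop[OF this(1)]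
        show "p \<in> PJv n k W v" unfolding PJv_def
          apply (rule CollectI, rule exI[where x="\<sigma>"], rule exI[where x="V - \<sigma>"])
          using sp \<open>p = _\<close> vV W by (auto simp: ks)
      qed
      show "PJv n k W v \<subseteq> (\<lambda>\<sigma>. {\<sigma>, V - \<sigma>}) ` S"
      proof
        fix p assume "p \<in> PJv n k W v"
        then obtain \<sigma> \<tau> where p: "p = {\<sigma>,\<tau>}" "\<sigma> \<in> ksimplices n k" "\<tau> \<in> ksimplices n k"
          "\<sigma> \<subseteq> W" "\<tau> \<subseteq> W" "\<sigma> \<inter> \<tau> = {}" "v \<notin> \<sigma>" "v \<notin> \<tau>" unfolding PJv_def by blast
        have sub: "\<sigma> \<union> \<tau> \<subseteq> V" using p V_def by auto
        have fst: "finite \<sigma>" "finite \<tau>" using p finW finite_subset by meson+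
        have "card (\<sigma> \<union> \<tau>) = card V" using p fst card_Un_disjoint[of \<sigma> \<tau>] cardV by (simp add: ks)
        hence eq: "\<sigma> \<union> \<tau> = V" using card_subset_eq[OF finV sub] by simp
        hence t: "\<tau> = V - \<sigma>" and s: "\<sigma> = V - \<tau>" using p(6) by auto
        show "p \<in> (\<lambda>\<sigma>. {\<sigma>, V - \<sigma>}) ` S"
        proof (cases "m \<in> \<sigma>")
          case True
          hence "\<sigma> \<in> S" using S_def sub p(2) by (auto simp: ks)
          thus ?thesis using p(1) t by blast
        next
          case False
          hence "m \<in> \<tau>" using eq mV by auto
          hence "\<tau> \<in> S" using S_def sub p(3) by (auto simp: ks)
          moreover have "p = {\<tau>, V - \<tau>}" using p(1) s by auto
          ultimately show ?thesis by blast
        qed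
      qed
    qed
  qed
  define Y where "Y = (SIGMA A:T. W - A)"
  have Tprop: "finite A \<and> A \<subseteq> W \<and> v \<in> A \<and> card A = k+1 \<and> card (W - A) = k+2 \<and> finite (W - A)" if "A \<in> T" for A
  proof -
    have "A \<subseteq> W" "card A = k+1" using that T_def by auto
    moreover have "card (W - A) = k+2" using calculation finW W(2) by (simp add: card_Diff_subset finite_subset)
    ultimately show ?thesis using that T_def finW finite_subset by auto
  qed
  have Yprop: "finite A \<and> A \<subseteq> W \<and> v \<in> A \<and> card A = k+1 \<and> x \<in> W \<and> x \<notin> A \<and> x \<noteq> v
     \<and> card (W - A - {x}) = k+1" if "(A,x) \<in> Y" for A x
  proof -
    have A: "A \<in> T" "x \<in> W - A" using that Y_def by auto
    note tp = Tprop[OF A(1)]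
    have "card (W - A - {x}) = k+1" using tp A(2) by simp
    thus ?thesis using tp A by auto
  qed
  have bij1: "bij_betw (\<lambda>p. {fst p, W - fst p - {snd p}}) Y P1"
    unfolding bij_betw_def
  proof
    show "inj_on (\<lambda>p. {fst p, W - fst p - {snd p}}) Y"
    proof (rule inj_onI)
      fix a b assume ab: "a \<in> Y" "b \<in> Y" "{fst a, W - fst a - {snd a}} = {fst b, W - fst b - {snd b}}"
      obtain A x B y where a: "a = (A,x)" and b: "b = (B,y)" by fastforce
      note ya = Yprop[of A x] and yb = Yprop[of B y]
      have "A \<in> {B, W - B - {y}}" using ab(3) a b by auto
      hence AB: "A = B" using ya yb ab(1,2) a b by auto
      hence "W - A - {x} = W - A - {y}" using ab(3) a b by (auto simp: doubleton_eq_iff)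
      hence "x = y" using ya yb ab(1,2) a b AB by auto
      thus "a = b" using a b AB by simp
    qed
    show "(\<lambda>p. {fst p, W - fst p - {snd p}}) ` Y = P1"
    proof
      show "(\<lambda>p. {fst p, W - fst p - {snd p}}) ` Y \<subseteq> P1"
      proof
        fix p assume "p \<in> (\<lambda>p. {fst p, W - fst p - {snd p}}) ` Y"
        then obtain A x where "(A,x) \<in> Y" "p = {A, W - A - {x}}" by auto
        note yp = Yprop[OF this(1)]
        show "p \<in> P1" unfolding P1_def
          apply (rule CollectI, rule exI[where x="A"], rule exI[where x="W - A - {x}"])
          using yp \<open>p = _\<close> W by (auto simp: ks)
      qed
      show "P1 \<subseteq> (\<lambda>p. {fst p, W - fst p - {snd p}}) ` Y"
      proof
        fix p assume "p \<in> P1"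
        then obtain \<sigma> \<tau> where p: "p = {\<sigma>,\<tau>}" "\<sigma> \<in> ksimplices n k" "\<tau> \<in> ksimplices n k"
          "\<sigma> \<subseteq> W" "\<tau> \<subseteq> W" "\<sigma> \<inter> \<tau> = {}" "v \<in> \<sigma>" unfolding P1_def by blast
        have fst: "finite \<sigma>" "finite \<tau>" using p finW finite_subset by meson+
        have "card (\<sigma> \<union> \<tau>) = 2*k+2" using p fst card_Un_disjoint[of \<sigma> \<tau>] by (simp add: ks)
        hence "card (W - (\<sigma> \<union> \<tau>)) = 1" using p(4,5) finW W(2) card_Diff_subset[of "\<sigma> \<union> \<tau>" W] fst by simp
        then obtain x where x: "W - (\<sigma> \<union> \<tau>) = {x}" by (rule card_1_singletonE)
        have t: "\<tau> = W - \<sigma> - {x}" using x p(5,6) by auto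
        have "(\<sigma>, x) \<in> Y" using x p(2,4,7) unfolding Y_def T_def by (auto simp: ks)
        moreover have "p = {fst (\<sigma>,x), W - fst (\<sigma>,x) - {snd (\<sigma>,x)}}" using p(1) t by simp
        ultimately show "p \<in> (\<lambda>p. {fst p, W - fst p - {snd p}}) ` Y" by blast
      qed
    qed
  qed

  have finS: "finite S" using finV finite_subset[of S "Pow V"] unfolding S_def by auto
  have finY: "finite Y" unfolding Y_def
    by (rule finite_SigmaI) (use finW T_def in \<open>auto intro: finite_subset\<close>)
  define G1 where "G1 = (\<lambda>p. g (fst p) (W - fst p - {snd p}))"
  have LHS: "upair_sum g (PJ n k W) = (\<Sum>\<sigma>\<in>S. g \<sigma> (V - \<sigma>)) + (\<Sum>p\<in>Y. G1 p)"
  proof -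
    have "upair_sum g (PJv n k W v) = (\<Sum>\<sigma>\<in>S. g \<sigma> (V - \<sigma>))"
      by (rule upair_sum_bij[of "\<lambda>\<sigma>. \<sigma>" "\<lambda>\<sigma>. V - \<sigma>", OF bijv _ gsym]) (use Sprop in auto)
    moreover have "upair_sum g P1 = (\<Sum>p\<in>Y. G1 p)" unfolding G1_def
      by (rule upair_sum_bij[of fst "\<lambda>p. W - fst p - {snd p}", OF bij1 _ gsym]) (use Yprop in force)
    ultimately show ?thesis using upair_split[of g] by simp
  qed
  define G2 where "G2 = (\<lambda>\<sigma> \<tau>. \<Omega> (\<psi> (bd (\<sigma> \<union> {v}))) (\<psi> (bd (\<tau> \<union> {v}))))"
  have RHS: "upair_sum G2 (PJv n k W v) = (\<Sum>\<sigma>\<in>S. G2 \<sigma> (V - \<sigma>))"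
  proof (rule upair_sum_bij[of "\<lambda>\<sigma>. \<sigma>" "\<lambda>\<sigma>. V - \<sigma>", OF bijv])
    show "\<forall>x\<in>S. x \<noteq> V - x"
    proof
      fix x assume "x \<in> S" thus "x \<noteq> V - x" using Sprop[of x] by blast
    qed
    show "\<forall>x y. G2 x y = G2 y x" unfolding G2_def using Omega_sym by blast
  qed
  define T2 where "T2 = (\<lambda>\<sigma>. \<Sum>y\<in>V - \<sigma>. g \<sigma> (insert v (V - \<sigma>) - {y}))"
  define T3 where "T3 = (\<lambda>\<sigma>. \<Sum>x\<in>\<sigma>. g (insert v \<sigma> - {x}) (V - \<sigma>))"
  define T4 where "T4 = (\<lambda>\<sigma>. \<Sum>x\<in>\<sigma>. \<Sum>y\<in>V - \<sigma>. g (insert v \<sigma> - {x}) (insert v (V - \<sigma>) - {y}))"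
  have Om_lin2: "\<Omega> z (x + y) = \<Omega> z x + \<Omega> z y" for x y z
    using Omega_lin[of x y z] Omega_sym by metis
  have expand: "G2 \<sigma> (V - \<sigma>) = g \<sigma> (V - \<sigma>) + T2 \<sigma> + T3 \<sigma> + T4 \<sigma>" if "\<sigma> \<in> S" for \<sigma>
  proof -
    note sp = Sprop[OF that]
    have e: "\<psi> (bd (A \<union> {v})) = \<psi> (elem A) + (\<Sum>x\<in>A. \<psi> (elem (insert v A - {x})))"
      if "A \<subseteq> W" "finite A" "v \<notin> A" "card A = k+1" for A
    proof -
      have "\<psi> (bd (A \<union> {v})) = (\<Sum>x\<in>insert v A. \<psi> (elem (insert v A - {x})))"
        using bd_exp[of "insert v A"] that v by simp
      also have "\<dots> = \<psi> (elem A) + (\<Sum>x\<in>A. \<psi> (elem (insert v A - {x})))"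
        using that by simp
      finally show ?thesis .
    qed
    have "G2 \<sigma> (V - \<sigma>) = \<Omega> (\<psi> (elem \<sigma>) + (\<Sum>x\<in>\<sigma>. \<psi> (elem (insert v \<sigma> - {x}))))
         (\<psi> (elem (V - \<sigma>)) + (\<Sum>y\<in>V - \<sigma>. \<psi> (elem (insert v (V - \<sigma>) - {y}))))"
    proof -
      have "V - \<sigma> \<subseteq> W" using vV by auto
      thus ?thesis unfolding G2_def using sp e[of \<sigma>] e[of "V - \<sigma>"] vV by simp
    qed
    also have "\<dots> = g \<sigma> (V - \<sigma>) + T2 \<sigma> + T3 \<sigma> + T4 \<sigma>"
    proof -
      have f1: "finite \<sigma>" "finite (V - \<sigma>)" using sp by auto
      have t2: "\<Omega> (\<psi> (elem \<sigma>)) (\<Sum>y\<in>V - \<sigma>. \<psi> (elem (insert v (V - \<sigma>) - {y}))) = T2 \<sigma>"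
        unfolding T2_def g_def by (rule Om_sum2[OF f1(2)])
      have t3: "\<Omega> (\<Sum>x\<in>\<sigma>. \<psi> (elem (insert v \<sigma> - {x}))) (\<psi> (elem (V - \<sigma>))) = T3 \<sigma>"
        unfolding T3_def g_def by (rule Om_sum1[OF f1(1)])
      have t4: "\<Omega> (\<Sum>x\<in>\<sigma>. \<psi> (elem (insert v \<sigma> - {x}))) (\<Sum>y\<in>V - \<sigma>. \<psi> (elem (insert v (V - \<sigma>) - {y}))) = T4 \<sigma>"
        unfolding T4_def g_def Om_sum1[OF f1(1)] by (rule sum.cong[OF refl], rule Om_sum2[OF f1(2)])
      show ?thesis unfolding bilin4[of \<Omega>, OF Omega_lin Om_lin2] t2 t3 t4 g_def ..
    qed
    finally show ?thesis .
  qed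

  have mW: "m \<in> W - {v}" using mV V_def by simp
  have p23: "(\<Sum>\<sigma>\<in>S. T2 \<sigma>) + (\<Sum>\<sigma>\<in>S. T3 \<sigma>) = (\<Sum>p\<in>Y. G1 p)"
    using part23[of W v k m g, OF finW v W(2) mW gsym]
    unfolding S_def V_def T2_def T3_def Y_def T_def G1_def .
  have p4: "(\<Sum>\<sigma>\<in>S. T4 \<sigma>) = 0"
    using part4[of W v k m g, OF finW v W(2) mW gsym k]
    unfolding S_def V_def T4_def .
  have "upair_sum (\<lambda>\<sigma> \<tau>. \<Omega> (\<psi> (bd (\<sigma> \<union> {v}))) (\<psi> (bd (\<tau> \<union> {v})))) (PJv n k W v)
      = (\<Sum>\<sigma>\<in>S. G2 \<sigma> (V - \<sigma>))" using RHS unfolding G2_def .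
  also have "\<dots> = (\<Sum>\<sigma>\<in>S. g \<sigma> (V - \<sigma>) + T2 \<sigma> + T3 \<sigma> + T4 \<sigma>)"
    by (rule sum.cong[OF refl]) (rule expand)
  also have "\<dots> = (\<Sum>\<sigma>\<in>S. g \<sigma> (V - \<sigma>)) + ((\<Sum>\<sigma>\<in>S. T2 \<sigma>) + (\<Sum>\<sigma>\<in>S. T3 \<sigma>)) + (\<Sum>\<sigma>\<in>S. T4 \<sigma>)"
    by (simp only: sum.distrib add.assoc)
  also have "\<dots> = upair_sum g (PJ n k W)" using LHS p23 p4 by simp
  also have "\<dots> = upair_sum (\<lambda>\<sigma> \<tau>. \<Omega> (\<psi> (elem \<sigma>)) (\<psi> (elem \<tau>))) (PJ n k W)" unfolding g_def ..
  finally show ?thesis by simp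
qed


end
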